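(* For an integer $k\ge 2$, the graph $\Gamma_k$ is self color dual if and only if $k$ is a power of $2$.
   Context: Let $T_0(x)=x/2$ and $T_1(x)=(3x+1)/2$. For a positive integer $k$, $\Gamma_k$ is the directed graph on $\mathbb{Z}/k\mathbb{Z}$ with a black arrow $r\to s$ iff there exist positive integers $x\equiv r$, $y\equiv s\pmod k$ with $x$ even and $T_0(x)=y$, and a red arrow $r\to s$ iff there exist such $x,y$ with $x$ odd and $T_1(x)=y$. The color dual of a red/black edge-coloured digraph is obtained by swapping the colours of all arrows; the digraph is self color dual if there is a bijection $\rho$ of its vertex set such that for all vertices $u,w$: there is a black arrow $u\to w$ iff there is a red arrow $\rho(u)\to\rho(w)$, and there is a red arrow $u\to w$ iff there is a black arrow $\rho(u)\to\rho(w)$. *)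

theory Defs
  imports Main
begin

text \<open>Vertices of Gamma_k are the residues 0..k-1 (representing Z/kZ).\<close>

definition T0 :: "nat \<Rightarrow> nat" where "T0 x = x div 2"
definition T1 :: "nat \<Rightarrow> nat" where "T1 x = (3 * x + 1) div 2"

definition black_arrow :: "nat \<Rightarrow> nat \<Rightarrow> nat \<Rightarrow> bool" where
  "black_arrow k r s \<longleftrightarrow> (\<exists>x y. 0 < x \<and> 0 < y \<and> x mod k = r \<and> y mod k = s
       \<and> even x \<and> T0 x = y)"

definition red_arrow :: "nat \<Rightarrow> nat \<Rightarrow> nat \<Rightarrow> bool" where
  "red_arrow k r s \<longleftrightarrow> (\<exists>x y. 0 < x \<and> 0 < y \<and> x mod k = r \<and> y mod k = s
       \<and> odd x \<and> T1 x = y)"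

definition self_color_dual :: "nat \<Rightarrow> bool" where
  "self_color_dual k \<longleftrightarrow> (\<exists>\<rho>. bij_betw \<rho> {0..<k} {0..<k} \<and>
     (\<forall>u\<in>{0..<k}. \<forall>w\<in>{0..<k}.
        (black_arrow k u w \<longleftrightarrow> red_arrow k (\<rho> u) (\<rho> w)) \<and>
        (red_arrow k u w \<longleftrightarrow> black_arrow k (\<rho> u) (\<rho> w))))"

end

theory Submission imports Defs "HOL-Number_Theory.Number_Theory" begin



definition coll :: "nat \<Rightarrow> nat" where
  "coll x = (if even x then x div 2 else (3*x+1) div 2)"

fun Q :: "nat \<Rightarrow> nat \<Rightarrow> nat" where
  "Q 0 x = 0"
| "Q (Suc n) x = x mod 2 + 2 * Q n (coll x)"

lemma mod2aux: "(b::nat) < 2 \<Longrightarrow> (b + 2*q) mod (2*M) = b + 2*(q mod M)"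
proof -
  assume b: "b < 2"
  have "(b + 2*q) mod (2*M) = 2*((b+2*q) div 2 mod M) + (b+2*q) mod 2"
    by (rule mod_mult2_eq)
  moreover have "(b+2*q) div 2 = q" using b by simp
  moreover have "(b+2*q) mod 2 = b" using b by simp
  ultimately show ?thesis by simp
qed

lemma eq2aux: "(b::nat) < 2 \<Longrightarrow> c < 2 \<Longrightarrow> (b + 2*A = c + 2*B) \<longleftrightarrow> b = c \<and> A = B"
  by presburger

lemma Q_lt: "Q n x < 2^n"
proof (induction n arbitrary: x)
  case 0 then show ?case by simp
next
  case (Suc n)
  have "Q n (coll x) + 1 \<le> 2^n" using Suc[of "coll x"] by linarith
  moreover have "x mod 2 \<le> 1" by simp
  ultimately show ?case by simp
qed

lemma coll_cong:
  assumes "x mod 2 = y mod 2"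
  shows "coll x mod 2^n = coll y mod 2^n \<longleftrightarrow> x mod 2^(Suc n) = y mod 2^(Suc n)"
proof (cases "even x")
  case True
  then have ey: "even y" using assms by (metis even_iff_mod_2_eq_zero)
  obtain a where a: "x = 2*a" using True by blast
  obtain b where b: "y = 2*b" using ey by blast
  show ?thesis unfolding coll_def using True ey a b
    by (simp add: mod_mult_mult1)
next
  case False
  then have oy: "odd y" using assms by (metis even_iff_mod_2_eq_zero odd_iff_mod_2_eq_one)
  obtain a where a: "x = 2*a+1" using False oddE by blast
  obtain b where b: "y = 2*b+1" using oy oddE by blast
  have c1: "coll x = 3*a+2" unfolding coll_def using a by simp
  have c2: "coll y = 3*b+2" unfolding coll_def using b by simp
  have "coll x mod 2^n = coll y mod 2^n \<longleftrightarrow> [3*a = 3*b] (mod 2^n)"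
    unfolding c1 c2 cong_def by (metis cong_add_rcancel_nat cong_def)
  also have "\<dots> \<longleftrightarrow> [a = b] (mod 2^n)"
    by (rule cong_mult_lcancel_nat) (simp add: coprime_commute)
  also have "\<dots> \<longleftrightarrow> [2*a+1 = 2*b+1] (mod 2^(Suc n))"
    unfolding cong_def using mod2aux[of 1 a "2^n"] mod2aux[of 1 b "2^n"] by (simp add: ac_simps)
  finally show ?thesis using a b by (simp add: cong_def)
qed

lemma Q_eq: "Q n x = Q n y \<longleftrightarrow> x mod 2^n = y mod 2^n"
proof (induction n arbitrary: x y)
  case 0 then show ?case by simp
next
  case (Suc n)
  have "Q (Suc n) x = Q (Suc n) y \<longleftrightarrow> x mod 2 = y mod 2 \<and> Q n (coll x) = Q n (coll y)"
    using eq2aux[of "x mod 2" "y mod 2" "Q n (coll x)" "Q n (coll y)"] by simp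
  also have "\<dots> \<longleftrightarrow> x mod 2 = y mod 2 \<and> x mod 2^(Suc n) = y mod 2^(Suc n)"
    using Suc coll_cong by blast
  also have "\<dots> \<longleftrightarrow> x mod 2^(Suc n) = y mod 2^(Suc n)"
    by (metis mod_mod_cancel dvd_power le_add1 plus_1_eq_Suc zero_less_Suc power_one_right dvd_power_le dvd_refl)
  finally show ?case .
qed

lemma Q_trunc: "Q (Suc n) x mod 2^n = Q n x"
proof (induction n arbitrary: x)
  case 0 then show ?case by simp
next
  case (Suc n)
  have "Q (Suc (Suc n)) x = x mod 2 + 2 * Q (Suc n) (coll x)" by simp
  then have "Q (Suc (Suc n)) x mod 2^(Suc n) = x mod 2 + 2 * (Q (Suc n) (coll x) mod 2^n)"
    using mod2aux[of "x mod 2" "Q (Suc n) (coll x)" "2^n"] by simp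
  also have "\<dots> = x mod 2 + 2 * Q n (coll x)" using Suc by presburger
  also have "\<dots> = Q (Suc n) x" by simp
  finally show ?case .
qed

lemma flipaux:
  assumes K: "(K::nat) > 0" and e: "z mod K = w mod K" and w: "w < 2*K" and ne: "z mod (2*K) \<noteq> w"
  shows "(z+K) mod (2*K) = w"
proof -
  have A: "z mod (2*K) = K*(z div K mod 2) + z mod K" using mod_mult2_eq[of z K 2] by (simp add: mult.commute)
  have B: "(z+K) mod (2*K) = K*((z+K) div K mod 2) + (z+K) mod K" using mod_mult2_eq[of "z+K" K 2] by (simp add: mult.commute)
  have C: "w = K*(w div K mod 2) + w mod K" using mod_mult2_eq[of w K 2] w by (simp add: mult.commute)
  have D: "(z+K) div K = z div K + 1" using K by simp
  have E: "(z+K) mod K = z mod K" by simp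
  have "z div K mod 2 \<noteq> w div K mod 2" using A C e ne by metis
  moreover have "\<forall>p q::nat. p mod 2 \<noteq> q mod 2 \<longrightarrow> (p+1) mod 2 = q mod 2" by presburger
  ultimately have "(z div K + 1) mod 2 = w div K mod 2" by blast
  then show ?thesis using B C D E e by metis
qed

lemma BE:
  assumes K: "K > 0" and u: "u < 2*K" and w: "w < 2*K"
  shows "black_arrow (2*K) u w \<longleftrightarrow> even u \<and> (u div 2) mod K = w mod K"
proof
  assume "black_arrow (2*K) u w"
  then obtain x y where xy: "x mod (2*K) = u" "y mod (2*K) = w" "even x" "x div 2 = y"
    unfolding black_arrow_def T0_def by blast
  then have x: "x = 2*y" by auto
  have u2: "u = 2*(y mod K)" using xy(1) x by (simp add: mod_mult_mult1)
  have "w mod K = y mod K" using xy(2) by (metis mod_mod_cancel dvd_triv_right)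
  then show "even u \<and> (u div 2) mod K = w mod K" using u2 by simp
next
  assume a: "even u \<and> (u div 2) mod K = w mod K"
  have "u div 2 < K" using u by simp
  then have ud: "u div 2 = w mod K" using a by simp
  have "(2*(w+2*K)) mod (2*K) = 2*((w+2*K) mod K)" by (rule mod_mult_mult1)
  also have "\<dots> = 2*(w mod K)" by simp
  also have "\<dots> = u" using ud a by (metis dvd_mult_div_cancel)
  finally have "(2*(w+2*K)) mod (2*K) = u" .
  moreover have "(w+2*K) mod (2*K) = w" using w by simp
  ultimately show "black_arrow (2*K) u w" unfolding black_arrow_def T0_def
    using K by (intro exI[of _ "2*(w+2*K)"] exI[of _ "w+2*K"]) auto
qed

lemma RE:
  assumes K: "K > 0" and u: "u < 2*K" and w: "w < 2*K"
  shows "red_arrow (2*K) u w \<longleftrightarrow> odd u \<and> ((3*u+1) div 2) mod K = w mod K"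
proof
  assume "red_arrow (2*K) u w"
  then obtain x y where xy: "x mod (2*K) = u" "y mod (2*K) = w" "odd x" "(3*x+1) div 2 = y"
    unfolding red_arrow_def T1_def by blast
  obtain a where a: "x = 2*a+1" using xy(3) oddE by blast
  have u2: "u = 1 + 2*(a mod K)" using xy(1) a mod2aux[of 1 a K] by (simp add: ac_simps)
  have y: "y = 3*a+2" using xy(4) a by simp
  have "(3*u+1) div 2 = 3*(a mod K) + 2" using u2 by simp
  then have "((3*u+1) div 2) mod K = (3*a+2) mod K" by (metis mod_add_left_eq mod_mult_right_eq)
  moreover have "w mod K = y mod K" using xy(2) by (metis mod_mod_cancel dvd_triv_right)
  ultimately show "odd u \<and> ((3*u+1) div 2) mod K = w mod K" using u2 y by simp
next
  assume a: "odd u \<and> ((3*u+1) div 2) mod K = w mod K"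
  obtain b where b: "u = 2*b+1" using a oddE by blast
  have z: "(3*u+1) div 2 = 3*b+2" using b by simp
  show "red_arrow (2*K) u w"
  proof (cases "(3*b+2) mod (2*K) = w")
    case True
    then show ?thesis unfolding red_arrow_def T1_def using u b
      by (intro exI[of _ u] exI[of _ "3*b+2"]) (auto simp: z)
  next
    case False
    have zz: "(3*b+2) mod K = w mod K" using a z by metis
    have f: "(3*b+2+K) mod (2*K) = w" using flipaux[OF K zz w False] .
    have "(3*b+2+3*K) mod (2*K) = (3*b+2+K + 2*K) mod (2*K)" by (simp add: algebra_simps)
    also have "\<dots> = w" using f by (metis mod_add_self2)
    finally have g: "(3*b+2+3*K) mod (2*K) = w" .
    have h: "(u + 2*K) mod (2*K) = u" using u by simp
    have i: "(3*(u+2*K)+1) div 2 = 3*b+2+3*K" using b by simp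
    show ?thesis unfolding red_arrow_def T1_def using b g h i
      by (intro exI[of _ "u+2*K"] exI[of _ "3*b+2+3*K"]) auto
  qed
qed

lemma Qpar: "Q (Suc j) u mod 2 = u mod 2" by simp

lemma Qdiv: "Q (Suc j) u div 2 = Q j (coll u)" by simp

lemma QE: "coll u mod 2^j = w mod 2^j \<longleftrightarrow> Q (Suc j) u div 2 = Q (Suc j) w mod 2^j"
  using Q_eq[of j "coll u" w] Q_trunc[of j w] by (simp only: Qdiv)

lemma divmod2: "(s::nat) < 2 \<Longrightarrow> (2*X + s) div 2 = X \<and> (2*X+s) mod 2 = s"
  by auto

lemma compl_aux:
  assumes N: "(N::nat) > 0" and p: "p < 2*N" and q: "q < 2*N"
  shows "((2*N-1-p) mod 2 \<noteq> p mod 2) \<and> ((2*N-1-p) div 2 = (2*N-1-q) mod N \<longleftrightarrow> p div 2 = q mod N)"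
proof -
  define a where "a = p div 2"
  define r where "r = p mod 2"
  have ar: "p = 2*a + r" unfolding a_def r_def by simp
  have r2: "r < 2" unfolding r_def by simp
  have a: "a < N" using ar p by linarith
  have e: "2*N-1-p = 2*(N-1-a) + (1-r)" using ar a r2 by linarith
  have r01: "1 - r < 2" by simp
  have "(2*(N-1-a) + (1-r)) div 2 = N-1-a \<and> (2*(N-1-a) + (1-r)) mod 2 = 1-r"
    using divmod2[OF r01] by blast
  then have p1: "(2*N-1-p) div 2 = N-1-a" and p2: "(2*N-1-p) mod 2 = 1 - r" using e by auto
  have qm: "(2*N-1-q) mod N = N - 1 - q mod N"
  proof (cases "q < N")
    case True
    have eq: "2*N-1-q = (N-1-q) + N" using True by linarith
    have "(2*N-1-q) mod N = ((N-1-q) + N) mod N" using eq by (rule arg_cong)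
    also have "\<dots> = (N-1-q) mod N" by (rule mod_add_self2)
    also have "\<dots> = N-1-q" using True N by (intro mod_less) linarith
    finally have h1: "(2*N-1-q) mod N = N-1-q" .
    have "q mod N = q" using True by (rule mod_less)
    then show ?thesis using h1 by simp
  next
    case False
    have eq: "q = (q - N) + N" using False by linarith
    have "q mod N = ((q - N) + N) mod N" using eq by (rule arg_cong)
    also have "\<dots> = (q - N) mod N" by (rule mod_add_self2)
    also have "\<dots> = q - N" using q False by (intro mod_less) linarith
    finally have qq: "q mod N = q - N" .
    have "2*N-1-q < N" using False N by linarith
    then have "(2*N-1-q) mod N = 2*N-1-q" by (rule mod_less)
    then show ?thesis using qq False q by linarith
  qed
  have qN: "q mod N < N" using N by simp
  have g1: "1 - r \<noteq> r" using r2 by presburger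
  have g2: "N-1-a = N-1-(q mod N) \<longleftrightarrow> a = q mod N" using a qN by linarith
  have pd: "p div 2 = a" and p3: "p mod 2 = r" unfolding a_def r_def by simp_all
  show ?thesis unfolding p1 p2 qm pd p3 using g1 g2 by blast
qed

lemma pow2_dual:
  fixes j :: nat
  shows "self_color_dual (2^(Suc j))"
proof -
  define M :: nat where "M = 2^(Suc j)"
  define N :: nat where "N = 2^j"
  have MN: "M = 2*N" unfolding M_def N_def by simp
  have N0: "N > 0" unfolding N_def by simp
  define f where "f = Q (Suc j)"
  have finj: "inj_on f {0..<M}"
  proof (rule inj_onI)
    fix x y assume "x \<in> {0..<M}" "y \<in> {0..<M}" "f x = f y"
    then show "x = y" using Q_eq[of "Suc j" x y] unfolding f_def M_def by (simp del: Q.simps)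
  qed
  have fsub: "f ` {0..<M} \<subseteq> {0..<M}" unfolding f_def M_def using Q_lt[of "Suc j"] by (auto simp del: Q.simps)
  have fim: "f ` {0..<M} = {0..<M}" using endo_inj_surj[OF _ fsub finj] by simp
  have fbij: "bij_betw f {0..<M} {0..<M}" using finj fim by (simp add: bij_betw_def)
  define c where "c = (\<lambda>p::nat. M - 1 - p)"
  have cinj: "inj_on c {0..<M}" unfolding inj_on_def c_def by auto
  have csub: "c ` {0..<M} \<subseteq> {0..<M}" unfolding c_def using N0 MN by auto
  have cbij: "bij_betw c {0..<M} {0..<M}" using endo_inj_surj[OF _ csub cinj] cinj by (simp add: bij_betw_def)
  define \<rho> where "\<rho> = inv_into {0..<M} f \<circ> c \<circ> f"
  have rbij: "bij_betw \<rho> {0..<M} {0..<M}" unfolding \<rho>_def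
    using bij_betw_trans[OF bij_betw_trans[OF fbij cbij] bij_betw_inv_into[OF fbij]] by (simp add: comp_assoc)
  have frho: "f (\<rho> u) = M - 1 - f u" if "u < M" for u
  proof -
    have "f u \<in> {0..<M}" using fsub that by (auto simp: image_subset_iff)
    then have "c (f u) \<in> f ` {0..<M}" using fim csub by blast
    then show ?thesis unfolding \<rho>_def c_def by (simp add: f_inv_into_f)
  qed
  have rlt: "\<rho> u < M" if "u < M" for u using rbij that by (auto simp: bij_betw_def)
  have edge: "(black_arrow M u w \<longleftrightarrow> even (f u) \<and> f u div 2 = f w mod N) \<and>
              (red_arrow M u w \<longleftrightarrow> odd (f u) \<and> f u div 2 = f w mod N)"
    if "u < M" "w < M" for u w
  proof -
    have par: "even (f u) \<longleftrightarrow> even u" unfolding f_def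
      by (metis Qpar even_iff_mod_2_eq_zero)
    have qe: "coll u mod N = w mod N \<longleftrightarrow> f u div 2 = f w mod N"
      unfolding f_def N_def by (rule QE)
    have b: "black_arrow M u w \<longleftrightarrow> even u \<and> (u div 2) mod N = w mod N"
      using BE[OF N0, of u w] that MN by simp
    have r: "red_arrow M u w \<longleftrightarrow> odd u \<and> ((3*u+1) div 2) mod N = w mod N"
      using RE[OF N0, of u w] that MN by simp
    show ?thesis using b r qe par unfolding coll_def by auto
  qed
  have main: "(black_arrow M u w \<longleftrightarrow> red_arrow M (\<rho> u) (\<rho> w)) \<and>
        (red_arrow M u w \<longleftrightarrow> black_arrow M (\<rho> u) (\<rho> w))" if "u < M" "w < M" for u w
  proof -
    have fu: "f u < M" "f w < M" unfolding f_def M_def using Q_lt[of "Suc j"] by (auto simp del: Q.simps)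
    have ca: "((2*N-1-f u) mod 2 \<noteq> f u mod 2) \<and> ((2*N-1-f u) div 2 = (2*N-1-f w) mod N \<longleftrightarrow> f u div 2 = f w mod N)"
      using compl_aux[OF N0, of "f u" "f w"] fu MN by simp
    have e1: "(black_arrow M u w \<longleftrightarrow> even (f u) \<and> f u div 2 = f w mod N) \<and>
              (red_arrow M u w \<longleftrightarrow> odd (f u) \<and> f u div 2 = f w mod N)" using edge that by blast
    have e2: "(black_arrow M (\<rho> u) (\<rho> w) \<longleftrightarrow> even (2*N-1-f u) \<and> (2*N-1-f u) div 2 = (2*N-1-f w) mod N) \<and>
              (red_arrow M (\<rho> u) (\<rho> w) \<longleftrightarrow> odd (2*N-1-f u) \<and> (2*N-1-f u) div 2 = (2*N-1-f w) mod N)"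
      using edge[OF rlt[OF that(1)] rlt[OF that(2)]] frho that MN by simp
    have gen: "\<forall>X Y::nat. X mod 2 \<noteq> Y mod 2 \<longrightarrow> (even Y \<longleftrightarrow> odd X)" by presburger
    have par: "even (2*N-1-f u) \<longleftrightarrow> odd (f u)" using gen ca by metis
    have ca2: "(2*N-1-f u) div 2 = (2*N-1-f w) mod N \<longleftrightarrow> f u div 2 = f w mod N" using ca by blast
    show ?thesis using e1 e2 par ca2 by blast
  qed
  show ?thesis unfolding self_color_dual_def M_def[symmetric]
    using rbij main by (intro exI[of _ \<rho>]) auto
qed

lemma two_odd_decomp: "(k::nat) > 0 \<Longrightarrow> \<exists>a m. k = 2^a * m \<and> odd m"
proof (induction k rule: less_induct)
  case (less k)
  show ?case
  proof (cases "even k")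
    case True
    then obtain k' where k': "k = 2*k'" by blast
    then have "k' < k" "k' > 0" using less.prems by auto
    then obtain a m where "k' = 2^a*m" "odd m" using less.IH by blast
    then show ?thesis using k' by (intro exI[of _ "Suc a"] exI[of _ m]) auto
  next
    case False
    then show ?thesis by (intro exI[of _ 0] exI[of _ k]) auto
  qed
qed

lemma blk_edge:
  assumes k: "k > 0"
  shows "black_arrow k (nat ((2*w) mod int k)) (nat (w mod int k))"
proof -
  define y where "y = nat (w mod int k) + k"
  have y0: "y > 0" using k y_def by simp
  have ym: "int (y mod k) = w mod int k" unfolding y_def using k by (simp add: zmod_int)
  have xm: "int ((2*y) mod k) = (2*w) mod int k"
  proof -
    have "int ((2*y) mod k) = (2 * int y) mod int k" by (simp add: zmod_int)
    also have "\<dots> = (2 * (w mod int k)) mod int k" unfolding y_def using k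
      by (simp add: algebra_simps)
    also have "\<dots> = (2*w) mod int k" by (simp add: mod_mult_right_eq)
    finally show ?thesis .
  qed
  have a1: "(2*y) mod k = nat ((2*w) mod int k)" using xm by (metis nat_int)
  have a2: "y mod k = nat (w mod int k)" using ym by (metis nat_int)
  show ?thesis unfolding black_arrow_def T0_def
  proof (intro exI conjI)
    show "0 < 2*y" "0 < y" using y0 by auto
    show "(2*y) mod k = nat ((2*w) mod int k)" by (rule a1)
    show "y mod k = nat (w mod int k)" by (rule a2)
    show "even (2*y)" by simp
    show "2*y div 2 = y" by simp
  qed
qed

lemma red_edge:
  assumes k: "k > 0"
  shows "red_arrow k (nat ((2*m+1) mod int k)) (nat ((3*m+2) mod int k))"
proof -
  define y where "y = nat (m mod int k)"
  have xm: "int ((2*y+1) mod k) = (2*m+1) mod int k"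
  proof -
    have "int ((2*y+1) mod k) = (2 * int y + 1) mod int k" by (simp add: zmod_int ac_simps)
    also have "\<dots> = (2 * (m mod int k) + 1) mod int k" unfolding y_def using k by simp
    also have "\<dots> = (2*m+1) mod int k" by (metis mod_add_left_eq mod_mult_right_eq)
    finally show ?thesis .
  qed
  have ym: "int ((3*y+2) mod k) = (3*m+2) mod int k"
  proof -
    have "int ((3*y+2) mod k) = (3 * int y + 2) mod int k" by (simp add: zmod_int ac_simps)
    also have "\<dots> = (3 * (m mod int k) + 2) mod int k" unfolding y_def using k by simp
    also have "\<dots> = (3*m+2) mod int k" by (metis mod_add_left_eq mod_mult_right_eq)
    finally show ?thesis .
  qed
  have t: "(3*(2*y+1)+1) div 2 = 3*y+2" by simp
  have a1: "(2*y+1) mod k = nat ((2*m+1) mod int k)" using xm by (metis nat_int)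
  have a2: "(3*y+2) mod k = nat ((3*m+2) mod int k)" using ym by (metis nat_int)
  show ?thesis unfolding red_arrow_def T1_def
  proof (intro exI conjI)
    show "0 < 2*y+1" "0 < 3*y+2" by auto
    show "(2*y+1) mod k = nat ((2*m+1) mod int k)" by (rule a1)
    show "(3*y+2) mod k = nat ((3*m+2) mod int k)" by (rule a2)
    show "odd (2*y+1)" by simp
    show "(3*(2*y+1)+1) div 2 = 3*y+2" by (rule t)
  qed
qed

lemma red_dvd:
  assumes "red_arrow k r s"
  shows "int k dvd (2 * int s - (3 * int r + 1))"
proof -
  obtain x y where xy: "x mod k = r" "y mod k = s" "odd x" "(3*x+1) div 2 = y"
    using assms unfolding red_arrow_def T1_def by blast
  have "2*y = 3*x+1" using xy(3,4) by presburger
  then have e: "2 * int y = 3 * int x + 1" by linarith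
  have "[int y = int s] (mod int k)" using xy(2) by (metis cong_def cong_int_iff mod_mod_trivial)
  moreover have "[int x = int r] (mod int k)" using xy(1) by (metis cong_def cong_int_iff mod_mod_trivial)
  ultimately have "[2 * int y = 3 * int x + 1] (mod int k) \<Longrightarrow> [2 * int s = 3 * int r + 1] (mod int k)"
    by (meson cong_add cong_refl cong_scalar_left cong_sym cong_trans)
  then show ?thesis using e by (simp add: cong_iff_dvd_diff)
qed

lemma blk_dvd:
  assumes "black_arrow k r s"
  shows "int k dvd (int r - 2 * int s)"
proof -
  obtain x y where xy: "x mod k = r" "y mod k = s" "even x" "x div 2 = y"
    using assms unfolding black_arrow_def T0_def by blast
  have e: "int x = 2 * int y" using xy(3,4) by auto
  have "[int y = int s] (mod int k)" using xy(2) by (metis cong_def cong_int_iff mod_mod_trivial)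
  moreover have "[int x = int r] (mod int k)" using xy(1) by (metis cong_def cong_int_iff mod_mod_trivial)
  ultimately have "[int r = 2 * int s] (mod int k)" using e
    by (metis cong_scalar_left cong_sym cong_trans)
  then show ?thesis by (simp add: cong_iff_dvd_diff)
qed

lemma dvd_lin1: "(K::int) dvd A \<Longrightarrow> X = ca*A \<Longrightarrow> K dvd X" by simp
lemma dvd_lin2: "(K::int) dvd A \<Longrightarrow> K dvd B \<Longrightarrow> X = ca*A + cb*B \<Longrightarrow> K dvd X" by simp
lemma dvd_lin3: "(K::int) dvd A \<Longrightarrow> K dvd B \<Longrightarrow> K dvd C \<Longrightarrow> X = ca*A + cb*B + cc*C \<Longrightarrow> K dvd X" by simp
lemma dvd_lin5: "(K::int) dvd A \<Longrightarrow> K dvd B \<Longrightarrow> K dvd C \<Longrightarrow> K dvd D \<Longrightarrow> K dvd E \<Longrightarrow>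
   X = ca*A + cb*B + cc*C + cd*D + ce*E \<Longrightarrow> K dvd X" by simp

lemma dual_imp_pow2:
  assumes k2: "k \<ge> 2" and sd: "self_color_dual k"
  shows "\<exists>n. k = 2^n"
proof -
  obtain \<rho> where bij: "bij_betw \<rho> {0..<k} {0..<k}" and
    E: "\<forall>u\<in>{0..<k}. \<forall>w\<in>{0..<k}. (black_arrow k u w \<longleftrightarrow> red_arrow k (\<rho> u) (\<rho> w)) \<and>
        (red_arrow k u w \<longleftrightarrow> black_arrow k (\<rho> u) (\<rho> w))"
    using sd unfolding self_color_dual_def by blast
  define K where "K = int k"
  have K0: "K > 0" using k2 K_def by simp
  have k0: "k > 0" using k2 by simp
  have lt: "nat (x mod K) < k" for x
    using K0 K_def by (simp add: nat_less_iff)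
  define g where "g x = int (\<rho> (nat (x mod K)))" for x
  have gcong: "g x = g y" if "K dvd (x - y)" for x y
  proof -
    have "x mod K = y mod K" using that by (simp only: mod_eq_dvd_iff)
    then show ?thesis unfolding g_def by simp
  qed
  have G1: "K dvd (2 * g w - (3 * g (2*w) + 1))" for w
  proof -
    have "black_arrow k (nat ((2*w) mod K)) (nat (w mod K))" using blk_edge[OF k0] K_def by simp
    then have "red_arrow k (\<rho> (nat ((2*w) mod K))) (\<rho> (nat (w mod K)))" using E lt by auto
    from red_dvd[OF this] show ?thesis unfolding g_def K_def by simp
  qed
  have G2: "K dvd (g (2*m+1) - 2 * g (3*m+2))" for m
  proof -
    have "red_arrow k (nat ((2*m+1) mod K)) (nat ((3*m+2) mod K))" using red_edge[OF k0] K_def by simp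
    then have "black_arrow k (\<rho> (nat ((2*m+1) mod K))) (\<rho> (nat ((3*m+2) mod K)))" using E lt by auto
    from blk_dvd[OF this] show ?thesis unfolding g_def K_def by simp
  qed
  show ?thesis
  proof (cases "3 dvd k")
    case True
    have "0 \<in> \<rho> ` {0..<k}" using bij k0 by (simp add: bij_betw_def)
    then obtain w where w: "w < k" "\<rho> w = 0" by auto
    have "g (int w) = 0" unfolding g_def K_def using w by simp
    have "K dvd (3 * g (2 * int w) + 1)"
      by (rule dvd_lin1[where ca="-1", OF G1[of "int w"]]) (simp add: \<open>g (int w) = 0\<close>)
    moreover have "int 3 dvd int k" by (subst int_dvd_int_iff) (rule True)
    then have "3 dvd K" using K_def by simp
    ultimately have "3 dvd (3 * g (2 * int w) + 1)" using dvd_trans by blast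
    then have "(3::int) dvd 1" by (simp add: dvd_add_right_iff)
    then show ?thesis by simp
  next
    case False
    have "\<not> int 3 dvd int k" by (subst int_dvd_int_iff) (rule False)
    then have n3: "\<not> (3::int) dvd K" using K_def by simp
    have p3: "prime (3::int)" by simp
    have "coprime (3::int) K" using prime_imp_coprime[OF p3 n3] .
    then obtain c where "[3 * c = 1] (mod K)" using cong_solve_coprime_int by blast
    then have D3: "K dvd (3*c - 1)" by (simp add: cong_iff_dvd_diff)
    have G1': "K dvd (g (2*w) - (2*c*g w - c))" for w
    proof -
      show ?thesis by (rule dvd_lin2[where ca="-c" and cb="-g (2*w)", OF G1[of w] D3]) (simp add: algebra_simps)
    qed
    have G2': "K dvd (g (c*(2*w-1)) - 2 * g w)" for w
    proof -
      define m where "m = c*(w-2)"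
      have "K dvd (3*m+2 - w)" by (rule dvd_lin1[where ca="w-2", OF D3]) (simp add: m_def algebra_simps)
      then have a: "g (3*m+2) = g w" by (rule gcong)
      have "K dvd (2*m+1 - c*(2*w-1))" by (rule dvd_lin1[where ca="-1", OF D3]) (simp add: m_def algebra_simps)
      then have b: "g (2*m+1) = g (c*(2*w-1))" by (rule gcong)
      show ?thesis using G2[of m] a b by simp
    qed
    have G1j: "K dvd (g (2^j * z) - ((2*c)^j * (g z + 1) - 1))" for j z
    proof (induction j)
      case 0 then show ?case by simp
    next
      case (Suc j)
      define W where "W = 2^j * z"
      have e: "2^(Suc j) * z = 2 * W" unfolding W_def by simp
      have IH: "K dvd (g W - ((2*c)^j * (g z + 1) - 1))" using Suc unfolding W_def .
      show ?case unfolding e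
        by (rule dvd_lin3[where ca=1 and cb="2*c" and cc="-1", OF G1'[of W] IH D3]) (simp add: algebra_simps)
    qed
    obtain a m where am: "k = 2^a * m" "odd m" using two_odd_decomp[OF k0] by blast
    define M where "M = int m"
    have KM: "K = 2^a * M" unfolding K_def M_def using am by simp
    have oM: "odd M" unfolding M_def using am by simp
    define t where "t = (2*c)^a * (1 - 4*c)"
    have T: "K dvd (g (2^a*(c*(2*(2*x)-1))) - g (2^(a+1)*(c*(2*x-1))) - t)" for x
    proof -
      define L1 where "L1 = g (2^(a+1)*(c*(2*x-1)))"
      define L3 where "L3 = g (2^a*(c*(2*(2*x)-1)))"
      define u1 where "u1 = g (c*(2*x-1))"
      define u2 where "u2 = g (c*(2*(2*x)-1))"
      define v where "v = g (2*x)"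
      define z where "z = g x"
      define P where "P = (2*c)^a"
      have F1: "K dvd (L1 - (2*c*P*(u1+1) - 1))" using G1j[of "a+1" "c*(2*x-1)"]
        unfolding L1_def u1_def P_def by (simp add: mult.assoc)
      have F3: "K dvd (L3 - (P*(u2+1) - 1))" using G1j[of a "c*(2*(2*x)-1)"]
        unfolding L3_def u2_def P_def by simp
      have F2: "K dvd (u1 - 2*z)" using G2'[of x] unfolding u1_def z_def .
      have F4: "K dvd (u2 - 2*v)" using G2'[of "2*x"] unfolding u2_def v_def .
      have F5: "K dvd (v - (2*c*z - c))" using G1'[of x] unfolding v_def z_def .
      have tP: "t = P * (1 - 4*c)" unfolding t_def P_def ..
      have "K dvd (L3 - L1 - t)"
        by (rule dvd_lin5[where ca=1 and cb="-1" and cc=P and cd="2*P" and ce="-2*c*P", OF F3 F1 F4 F5 F2])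
           (simp add: tP algebra_simps)
      then show ?thesis unfolding L1_def L3_def .
    qed
    define q where "q = ((M+1) div 2)^2"
    have q4: "4*q = (M+1)^2"
    proof -
      have "even (M+1)" using oM by simp
      then have h: "2 * ((M+1) div 2) = M+1" by (rule dvd_mult_div_cancel)
      have "4*q = (2 * ((M+1) div 2))^2" unfolding q_def by (simp add: power_mult_distrib)
      then show ?thesis unfolding h .
    qed
    define A where "A = (2::int)^a"
    have H1: "K dvd (g (A*c) - g 0 - t)"
    proof -
      have e1: "g (2^(a+1)*(c*(2*(2*q)-1))) = g 0"
      proof (rule gcong)
        have "2^(a+1)*(c*(2*(2*q)-1)) - 0 = 2^a*c*(2*(4*q) - 2)" unfolding A_def by (simp add: algebra_simps)
        also have "\<dots> = 2^a*c*(2*(M+1)^2 - 2)" by (simp only: q4)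
        also have "\<dots> = K * (2*c*(M+2))" unfolding KM by (simp add: algebra_simps power2_eq_square)
        finally have "2^(a+1)*(c*(2*(2*q)-1)) - 0 = K * (2*c*(M+2))" .
        then show "K dvd (2^(a+1)*(c*(2*(2*q)-1)) - 0)" by (rule dvdI)
      qed
      have e2: "g (2^a*(c*(2*(2*(2*q))-1))) = g (A*c)"
      proof (rule gcong)
        have "2^a*(c*(2*(2*(2*q))-1)) - A*c = 2^a*c*(2*(4*q) - 2)" unfolding A_def by (simp add: algebra_simps)
        also have "\<dots> = 2^a*c*(2*(M+1)^2 - 2)" by (simp only: q4)
        also have "\<dots> = K * (2*c*(M+2))" unfolding KM by (simp add: algebra_simps power2_eq_square)
        finally have "2^a*(c*(2*(2*(2*q))-1)) - A*c = K * (2*c*(M+2))" .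
        then show "K dvd (2^a*(c*(2*(2*(2*q))-1)) - A*c)" by (rule dvdI)
      qed
      show ?thesis using T[of "2*q"] e1 e2 by simp
    qed
    have H2: "K dvd (g (2*(A*c)) - g (A*c) - t)"
    proof -
      have e1: "g (2^(a+1)*(c*(2*(3*q)-1))) = g (A*c)"
      proof (rule gcong)
        have "2^(a+1)*(c*(2*(3*q)-1)) - A*c = 2^a*c*(3*(4*q) - 3)" unfolding A_def by (simp add: algebra_simps)
        also have "\<dots> = 2^a*c*(3*(M+1)^2 - 3)" by (simp only: q4)
        also have "\<dots> = K * (3*c*(M+2))" unfolding KM by (simp add: algebra_simps power2_eq_square)
        finally have "2^(a+1)*(c*(2*(3*q)-1)) - A*c = K * (3*c*(M+2))" .
        then show "K dvd (2^(a+1)*(c*(2*(3*q)-1)) - A*c)" by (rule dvdI)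
      qed
      have e2: "g (2^a*(c*(2*(2*(3*q))-1))) = g (2*(A*c))"
      proof (rule gcong)
        have "2^a*(c*(2*(2*(3*q))-1)) - 2*(A*c) = 2^a*c*(3*(4*q) - 3)" unfolding A_def by (simp add: algebra_simps)
        also have "\<dots> = 2^a*c*(3*(M+1)^2 - 3)" by (simp only: q4)
        also have "\<dots> = K * (3*c*(M+2))" unfolding KM by (simp add: algebra_simps power2_eq_square)
        finally have "2^a*(c*(2*(2*(3*q))-1)) - 2*(A*c) = K * (3*c*(M+2))" .
        then show "K dvd (2^a*(c*(2*(2*(3*q))-1)) - 2*(A*c))" by (rule dvdI)
      qed
      show ?thesis using T[of "3*q"] e1 e2 by simp
    qed
    have H0: "K dvd (g 0 + 1)"
    proof -
      show ?thesis by (rule dvd_lin2[where ca=3 and cb="2*g 0 - 1", OF G1'[of 0] D3]) (simp add: algebra_simps)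
    qed
    have H3: "K dvd (g (2*(A*c)) - (2*c*g (A*c) - c))" using G1'[of "A*c"] .
    have H4: "K dvd (2*t*(1-c))"
      by (rule dvd_lin5[where ca=1 and cb="-1" and cc="-(1-2*c)" and cd="-(1-2*c)" and ce="-1", OF H3 H2 H1 H0 D3])
         (simp add: algebra_simps)
    have H5: "K dvd (4*t)"
      by (rule dvd_lin2[where ca=3 and cb="2*t", OF H4 D3]) (simp add: algebra_simps)
    define U where "U = (3*c)^a"
    have U1: "K dvd (U - 1)"
    proof -
      have "[3*c = 1] (mod K)" using D3 by (simp add: cong_iff_dvd_diff)
      then have "[(3*c)^a = 1^a] (mod K)" by (rule cong_pow)
      then show ?thesis unfolding U_def by (simp add: cong_iff_dvd_diff)
    qed
    have pu: "(2*c)^a * 3^a = 2^a * U"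
    proof -
      have "(2*c)^a * 3^a = (2*c*3)^a" by (rule power_mult_distrib[symmetric])
      also have "(2*c*3) = 2*(3*c)" by simp
      also have "(2*(3*c))^a = 2^a * U" unfolding U_def by (rule power_mult_distrib)
      finally show ?thesis .
    qed
    have gen: "(3*Y)*(4*(X*(1-4*c))) = 4*(3-12*c)*(X*Y)" for X Y :: int by (simp add: algebra_simps)
    have p3: "(3::int)^(a+1) = 3*3^a" by simp
    have t3: "3^(a+1)*(4*t) = 4*(3-12*c)*((2*c)^a * 3^a)" unfolding t_def p3 by (rule gen)
    have t4: "3^(a+1)*(4*t) = 4*(3-12*c)*(2^a * U)" using t3 unfolding pu .
    have e5: "(2::int)^(a+2) = 4*2^a" by simp
    have m5: "-(3^(a+1))*(4*t) = -(4*(3-12*c)*(2^a*U))" using t4 by simp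
    have gen2: "4*W = -(4*(3-12*c)*(W*U)) + 4*W*(3-12*c)*(U-1) + (-16*W)*(3*c-1)" for W :: int
      by (simp add: algebra_simps)
    have "K dvd 2^(a+2)"
      by (rule dvd_lin3[where ca="-(3^(a+1))" and cb="4*2^a*(3-12*c)" and cc="-16*2^a", OF H5 U1 D3])
         (unfold e5 m5, rule gen2)
    then have "int k dvd int (2^(a+2))" unfolding K_def by simp
    then have "k dvd 2^(a+2)" by (simp only: int_dvd_int_iff)
    then obtain i where "k = 2^i" using divides_primepow_nat[of 2 k "a+2"] by auto
    then show ?thesis by blast
  qed
qed

theorem mainTheorem17:
  fixes k :: nat
  assumes "k \<ge> 2"
  shows "self_color_dual k \<longleftrightarrow> (\<exists>n. k = 2 ^ n)"
proof
  assume "self_color_dual k"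
  then show "\<exists>n. k = 2 ^ n" using dual_imp_pow2 assms by blast
next
  assume "\<exists>n. k = 2 ^ n"
  then obtain n where n: "k = 2^n" by blast
  then have "n \<noteq> 0" using assms by (cases n) auto
  then obtain j where "n = Suc j" using not0_implies_Suc by blast
  then show "self_color_dual k" using n pow2_dual by simp
qed

end
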